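(* Let $C_s$ be a generalized sequential choice rule with categories $1,\dots,K$ as described in the context, and let $X^M=(x^1,\dots,x^M)$ be an observable offer process for $s$. For every $m\in\{1,\dots,M\}$ and every category $k\in\{1,\dots,K\}$ (with $X^0=\emptyset$): 1. $C_k(H_k(X^{m-1});q_k^{m-1})\subseteq H_k(X^m)$; 2. $C_k(F_k(X^m);q_k^m)\subseteq C_k(H_k(X^{m-1});q_k^{m-1})\cup[H_k(X^m)\setminus H_k(X^{m-1})]$; 3. $C_k(H_k(X^m);q_k^m)=C_k(F_k(X^m);q_k^m)$; 4. $q_k^{m-1}\ge q_k^m$; 5. $R_k(F_k(X^{m-1});q_k^{m-1})\subseteq R_k(F_k(X^m);q_k^m)$.
   Context: Contracts: a finite set $X$; each $x\in X$ has an individual $\mathbf{i}(x)$ and an institution $\mathbf{s}(x)$; $X_s=\{x:\mathbf{s}(x)=s\}$, $\mathbf{i}(Y)=\{\mathbf{i}(x):x\in Y\}$, and $Y_i$ is the set of contracts of $i$ in $Y$. Generalized sequential choice rule $C_s$: there are ordered categories $1,\dots,K$. Each category $k$ has a choice rule $C_k(\cdot\,;q):2^{X_s}\to 2^{X_s}$ for every capacity $q\in\mathbb{Z}_+$, with $C_k(Y;q)\subseteq Y$, choosing at most one contract per individual, such that for each fixed $q$: (substitutes) for all $x,y$ and $Z$, $y\notin C_k(Z\cup\{y\};q)$ implies $y\notin C_k(Z\cup\{x,y\};q)$; (size monotonicity) $|C_k(Z;q)|\le|C_k(Z\cup\{x\};q)|$; and (quota monotonicity) $C_k(Y;q)\subseteq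 C_k(Y;q+1)$ and $|C_k(Y;q+1)|-|C_k(Y;q)|\le1$ for all $Y$. Given $Y\subseteq X_s$, the rule is computed sequentially: $H_1(Y)=Y$ and $q_1$ is an exogenous capacity; for $k\ge1$, $r_k=q_k-|C_k(H_k(Y);q_k)|$ is the unused capacity of category $k$; $q_k=q_k(r_1,\dots,r_{k-1})$ for $k\ge2$, where each transfer function $q_k(\cdot)$ is weakly increasing in each argument (monotone transfer policy); $H_k(Y)=\{y\in Y:\mathbf{i}(y)\notin\mathbf{i}(\bigcup_{k'<k}C_{k'}(H_{k'}(Y);q_{k'}))\}$ is the set of contracts available to category $k$. Then $C_s(Y)=\bigcup_{k}C_k(H_k(Y);q_k)$. Write $R_k(Y;q)=Y\setminus C_k(Y;q)$. Offer process: a finite sequence of distinct contracts $(x^1,\dots,x^M)$ in $X_s$; it is observable if for every $m$, $\mathbf{i}(x^m)\notin\mathbf{i}(C_s(\{x^1,\dots,x^{m-1}\}))$. Write $X^m=\{x^1,\dots,x^m\}$ and $X^0=\emptyset$. $H_k(X^m)$ denotes the set of contracts available to category $k$ in the computation of $C_s(X^m)$, $q_k^m$ the capacity of category $k$ in that computation (so $q_k^m=q_k(\tilde r_1,\dots,\tilde r_{k-1})$ with the unused capacities $\tilde r$ of that computation, and $q_1^m=q_1$), and $F_k(X^m)=\bigcup_{n\le m}H_k(X^n)$. *)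

theory Defs
  imports Main
begin

text \<open>Contracts have type 'x, individuals 'i, institutions 's.
  A category choice rule family is  C :: nat \<Rightarrow> 'x set \<Rightarrow> nat \<Rightarrow> 'x set,
  where  C k Y q  is C_k(Y;q).  Transfer functions are  qf :: nat \<Rightarrow> (nat \<Rightarrow> int) \<Rightarrow> nat,
  where  qf k r = q_k(r 1, ..., r (k-1))  (only the values r j, 1 \<le> j < k, matter;
  this follows from the monotonicity assumption below).  Unused capacities are
  integers  r_k = q_k - |C_k(H_k;q_k)|.\<close>

definition contracts_of :: "'x set \<Rightarrow> ('x \<Rightarrow> 's) \<Rightarrow> 's \<Rightarrow> 'x set" where
  "contracts_of X inst s = {x \<in> X. inst x = s}"

text \<open>State after processing categories 1..k: (union of chosen sets, unused capacities).\<close>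
fun seq_state :: "(nat \<Rightarrow> 'x set \<Rightarrow> nat \<Rightarrow> 'x set) \<Rightarrow> (nat \<Rightarrow> (nat \<Rightarrow> int) \<Rightarrow> nat)
    \<Rightarrow> ('x \<Rightarrow> 'i) \<Rightarrow> 'x set \<Rightarrow> nat \<Rightarrow> 'x set \<times> (nat \<Rightarrow> int)" where
  "seq_state C qf ind Y 0 = ({}, (\<lambda>_. 0))"
| "seq_state C qf ind Y (Suc k) =
     (let (U, r) = seq_state C qf ind Y k;
          H = {y \<in> Y. ind y \<notin> ind ` U};
          q = qf (Suc k) r;
          c = C (Suc k) H q
      in (U \<union> c, r(Suc k := int q - int (card c))))"

text \<open>H_k(Y): contracts available to category k (k \<ge> 1).\<close>
definition avail :: "(nat \<Rightarrow> 'x set \<Rightarrow> nat \<Rightarrow> 'x set) \<Rightarrow> (nat \<Rightarrow> (nat \<Rightarrow> int) \<Rightarrow> nat)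
    \<Rightarrow> ('x \<Rightarrow> 'i) \<Rightarrow> 'x set \<Rightarrow> nat \<Rightarrow> 'x set" where
  "avail C qf ind Y k = {y \<in> Y. ind y \<notin> ind ` fst (seq_state C qf ind Y (k - 1))}"

text \<open>q_k in the computation of C_s(Y) (k \<ge> 1).\<close>
definition cap :: "(nat \<Rightarrow> 'x set \<Rightarrow> nat \<Rightarrow> 'x set) \<Rightarrow> (nat \<Rightarrow> (nat \<Rightarrow> int) \<Rightarrow> nat)
    \<Rightarrow> ('x \<Rightarrow> 'i) \<Rightarrow> 'x set \<Rightarrow> nat \<Rightarrow> nat" where
  "cap C qf ind Y k = qf k (snd (seq_state C qf ind Y (k - 1)))"

definition seq_choice :: "(nat \<Rightarrow> 'x set \<Rightarrow> nat \<Rightarrow> 'x set) \<Rightarrow> (nat \<Rightarrow> (nat \<Rightarrow> int) \<Rightarrow> nat)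
    \<Rightarrow> ('x \<Rightarrow> 'i) \<Rightarrow> nat \<Rightarrow> 'x set \<Rightarrow> 'x set" where
  "seq_choice C qf ind K Y = fst (seq_state C qf ind Y K)"

definition rejected :: "(nat \<Rightarrow> 'x set \<Rightarrow> nat \<Rightarrow> 'x set) \<Rightarrow> nat \<Rightarrow> 'x set \<Rightarrow> nat \<Rightarrow> 'x set" where
  "rejected C k Y q = Y - C k Y q"

definition category_rule :: "'x set \<Rightarrow> ('x \<Rightarrow> 'i) \<Rightarrow> ('x set \<Rightarrow> nat \<Rightarrow> 'x set) \<Rightarrow> bool" where
  "category_rule Xs ind Ck \<longleftrightarrow>
     (\<forall>Y q. Y \<subseteq> Xs \<longrightarrow> Ck Y q \<subseteq> Y \<and> inj_on ind (Ck Y q)) \<and>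
     (\<forall>q x y Z. Z \<subseteq> Xs \<longrightarrow> x \<in> Xs \<longrightarrow> y \<in> Xs \<longrightarrow>
         y \<notin> Ck (Z \<union> {y}) q \<longrightarrow> y \<notin> Ck (Z \<union> {x, y}) q) \<and>
     (\<forall>q x Z. Z \<subseteq> Xs \<longrightarrow> x \<in> Xs \<longrightarrow> card (Ck Z q) \<le> card (Ck (Z \<union> {x}) q)) \<and>
     (\<forall>q Y. Y \<subseteq> Xs \<longrightarrow> Ck Y q \<subseteq> Ck Y (q + 1) \<and>
         int (card (Ck Y (q + 1))) - int (card (Ck Y q)) \<le> 1)"

text \<open>Monotone transfer policy: q_k depends only on r_1..r_{k-1}, weakly increasingly.
  For k = 1 this forces q_1 to be a constant (the exogenous capacity).\<close>
definition monotone_transfer :: "(nat \<Rightarrow> (nat \<Rightarrow> int) \<Rightarrow> nat) \<Rightarrow> nat \<Rightarrow> bool" where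
  "monotone_transfer qf K \<longleftrightarrow>
     (\<forall>k \<in> {1..K}. \<forall>r r'. (\<forall>j \<in> {1..<k}. r j \<le> r' j) \<longrightarrow> qf k r \<le> qf k r')"

definition gen_seq_rule :: "'x set \<Rightarrow> ('x \<Rightarrow> 'i) \<Rightarrow> ('x \<Rightarrow> 's) \<Rightarrow> 's \<Rightarrow> nat
    \<Rightarrow> (nat \<Rightarrow> 'x set \<Rightarrow> nat \<Rightarrow> 'x set) \<Rightarrow> (nat \<Rightarrow> (nat \<Rightarrow> int) \<Rightarrow> nat) \<Rightarrow> bool" where
  "gen_seq_rule X ind inst s K C qf \<longleftrightarrow>
     finite X \<and>
     (\<forall>k \<in> {1..K}. category_rule (contracts_of X inst s) ind (C k)) \<and>
     monotone_transfer qf K"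

text \<open>Observable offer process xs = [x^1, ..., x^M]; X^m = set (take m xs).\<close>
definition observable :: "'x set \<Rightarrow> ('x \<Rightarrow> 'i) \<Rightarrow> ('x \<Rightarrow> 's) \<Rightarrow> 's \<Rightarrow> nat
    \<Rightarrow> (nat \<Rightarrow> 'x set \<Rightarrow> nat \<Rightarrow> 'x set) \<Rightarrow> (nat \<Rightarrow> (nat \<Rightarrow> int) \<Rightarrow> nat) \<Rightarrow> 'x list \<Rightarrow> bool" where
  "observable X ind inst s K C qf xs \<longleftrightarrow>
     distinct xs \<and> set xs \<subseteq> contracts_of X inst s \<and>
     (\<forall>m < length xs. ind (xs ! m) \<notin> ind ` seq_choice C qf ind K (set (take m xs)))"

definition F_avail :: "(nat \<Rightarrow> 'x set \<Rightarrow> nat \<Rightarrow> 'x set) \<Rightarrow> (nat \<Rightarrow> (nat \<Rightarrow> int) \<Rightarrow> nat)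
    \<Rightarrow> ('x \<Rightarrow> 'i) \<Rightarrow> 'x list \<Rightarrow> nat \<Rightarrow> nat \<Rightarrow> 'x set" where
  "F_avail C qf ind xs k m = (\<Union>n \<in> {0..m}. avail C qf ind (set (take n xs)) k)"

end

theory Submission
  imports Defs
begin


lemma cr_parts:
  assumes "category_rule Xs ind Ck"
  shows "\<forall>Y q. Y \<subseteq> Xs \<longrightarrow> Ck Y q \<subseteq> Y \<and> inj_on ind (Ck Y q)"
   "\<forall>q x y Z. Z \<subseteq> Xs \<longrightarrow> x \<in> Xs \<longrightarrow> y \<in> Xs \<longrightarrow>
         y \<notin> Ck (Z \<union> {y}) q \<longrightarrow> y \<notin> Ck (Z \<union> {x, y}) q"
   "\<forall>q x Z. Z \<subseteq> Xs \<longrightarrow> x \<in> Xs \<longrightarrow> card (Ck Z q) \<le> card (Ck (Z \<union> {x}) q)"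
   "\<forall>q Y. Y \<subseteq> Xs \<longrightarrow> Ck Y q \<subseteq> Ck Y (q + 1) \<and>
         int (card (Ck Y (q + 1))) - int (card (Ck Y q)) \<le> 1"
  using assms unfolding category_rule_def by auto

lemma cr_sub: "category_rule Xs ind Ck \<Longrightarrow> Y \<subseteq> Xs \<Longrightarrow> Ck Y q \<subseteq> Y"
  using cr_parts(1) by blast

lemma cr_subst1: "category_rule Xs ind Ck \<Longrightarrow> Z \<subseteq> Xs \<Longrightarrow> x \<in> Xs \<Longrightarrow> y \<in> Xs
   \<Longrightarrow> y \<notin> Ck (Z \<union> {y}) q \<Longrightarrow> y \<notin> Ck (Z \<union> {x, y}) q"
  using cr_parts(2) by metis

lemma cr_size1: "category_rule Xs ind Ck \<Longrightarrow> Z \<subseteq> Xs \<Longrightarrow> x \<in> Xs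
   \<Longrightarrow> card (Ck Z q) \<le> card (Ck (Z \<union> {x}) q)"
  using cr_parts(3) by metis

lemma cr_quota1: "category_rule Xs ind Ck \<Longrightarrow> Y \<subseteq> Xs \<Longrightarrow>
   Ck Y q \<subseteq> Ck Y (q + 1) \<and> int (card (Ck Y (q + 1))) - int (card (Ck Y q)) \<le> 1"
  using cr_parts(4) by metis

lemma cr_subst_aux:
  assumes cr: "category_rule Xs ind Ck" and "finite D"
  shows "A \<union> D \<subseteq> Xs \<Longrightarrow> y \<in> A \<Longrightarrow> y \<notin> Ck A q \<Longrightarrow> y \<notin> Ck (A \<union> D) q"
  using \<open>finite D\<close>
proof (induction D rule: finite_induct)
  case empty thus ?case by simp
next
  case (insert d D)
  have yn: "y \<notin> Ck (A \<union> D) q" using insert by auto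
  let ?Z = "A \<union> D - {y}"
  have e1: "?Z \<union> {y} = A \<union> D" using insert.prems by auto
  have e2: "?Z \<union> {d, y} = A \<union> insert d D" using insert.prems by auto
  have "y \<notin> Ck (?Z \<union> {d,y}) q"
    using cr_subst1[OF cr, of ?Z d y q] e1 yn insert.prems by auto
  thus ?case using e2 by simp
qed

lemma cr_subst:
  assumes cr: "category_rule Xs ind Ck" and fin: "finite Xs"
    and "A \<subseteq> B" "B \<subseteq> Xs" "y \<in> A" "y \<notin> Ck A q"
  shows "y \<notin> Ck B q"
proof -
  have "finite (B - A)" using fin assms(4) by (meson finite_Diff finite_subset)
  moreover have "A \<union> (B - A) = B" using assms(3) by auto
  ultimately show ?thesis using cr_subst_aux[OF cr, of "B - A" A y q] assms by auto
qed

lemma cr_size_aux: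
  assumes cr: "category_rule Xs ind Ck" and "finite D"
  shows "A \<union> D \<subseteq> Xs \<Longrightarrow> card (Ck A q) \<le> card (Ck (A \<union> D) q)"
  using \<open>finite D\<close>
proof (induction D rule: finite_induct)
  case empty thus ?case by simp
next
  case (insert d D)
  have "card (Ck A q) \<le> card (Ck (A \<union> D) q)" using insert by auto
  also have "\<dots> \<le> card (Ck (A \<union> D \<union> {d}) q)"
    using cr_size1[OF cr, of "A \<union> D" d q] insert.prems by auto
  finally show ?case by simp
qed

lemma cr_size:
  assumes cr: "category_rule Xs ind Ck" and fin: "finite Xs"
    and "A \<subseteq> B" "B \<subseteq> Xs"
  shows "card (Ck A q) \<le> card (Ck B q)"
proof -
  have "finite (B - A)" using fin assms(4) by (meson finite_Diff finite_subset)
  moreover have "A \<union> (B - A) = B" using assms(3) by auto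
  ultimately show ?thesis using cr_size_aux[OF cr, of "B - A" A q] assms by auto
qed

lemma cr_irc_aux:
  assumes cr: "category_rule Xs ind Ck" and fin: "finite Xs" and "finite D"
  shows "A \<union> D \<subseteq> Xs \<Longrightarrow> Ck (A \<union> D) q \<subseteq> A \<Longrightarrow> Ck A q = Ck (A \<union> D) q"
  using \<open>finite D\<close>
proof (induction D arbitrary: A rule: finite_induct)
  case empty thus ?case by simp
next
  case (insert d D)
  show ?case
  proof (cases "d \<in> A")
    case True
    hence "A \<union> insert d D = A \<union> D" by auto
    thus ?thesis using insert by auto
  next
    case False
    let ?Bz = "A \<union> D"
    let ?B = "A \<union> insert d D"
    have eB: "?B = ?Bz \<union> {d}" by auto
    have s1: "Ck ?B q \<subseteq> Ck ?Bz q"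
    proof
      fix y assume y: "y \<in> Ck ?B q"
      have "y \<in> ?B" using y cr_sub[OF cr insert.prems(1)] by blast
      moreover have "y \<noteq> d" using y insert.prems(2) False by auto
      ultimately have yB0: "y \<in> ?Bz" by auto
      show "y \<in> Ck ?Bz q"
      proof (rule ccontr)
        assume n: "y \<notin> Ck ?Bz q"
        have e1: "(?Bz - {y}) \<union> {y} = ?Bz" using yB0 by auto
        have e2: "(?Bz - {y}) \<union> {d, y} = ?B" using yB0 by auto
        have "y \<notin> Ck ((?Bz - {y}) \<union> {d, y}) q"
          using cr_subst1[OF cr, of "?Bz - {y}" d y q] e1 n insert.prems(1) yB0 by auto
        thus False using e2 y by simp
      qed
    qed
    have c1: "card (Ck ?Bz q) \<le> card (Ck ?B q)"
      using cr_size1[OF cr, of ?Bz d q] insert.prems(1) eB by auto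
    have B0X: "?Bz \<subseteq> Xs" using insert.prems(1) by auto
    have finB0: "finite (Ck ?Bz q)"
      using cr_sub[OF cr B0X, of q] B0X fin by (meson finite_subset)
    have eq: "Ck ?B q = Ck ?Bz q"
      using card_subset_eq[OF finB0 s1] c1 card_mono[OF finB0 s1] by simp
    have sb: "Ck ?Bz q \<subseteq> A" using eq insert.prems(2) by simp
    have "Ck A q = Ck ?Bz q" using insert.IH[OF B0X sb] .
    thus ?thesis using eq by simp
  qed
qed

lemma cr_irc:
  assumes cr: "category_rule Xs ind Ck" and fin: "finite Xs"
    and "A \<subseteq> B" "B \<subseteq> Xs" "Ck B q \<subseteq> A"
  shows "Ck A q = Ck B q"
proof -
  have "finite (B - A)" using fin assms(4) by (meson finite_Diff finite_subset)
  moreover have "A \<union> (B - A) = B" using assms(3) by auto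
  ultimately show ?thesis using cr_irc_aux[OF cr fin, of "B - A" A q] assms by auto
qed

lemma cr_quota:
  assumes cr: "category_rule Xs ind Ck" and Y: "Y \<subseteq> Xs"
  shows "Ck Y q \<subseteq> Ck Y (q + d) \<and>
     int q - int (card (Ck Y q)) \<le> int (q + d) - int (card (Ck Y (q + d)))"
proof (induction d)
  case 0 thus ?case by simp
next
  case (Suc d)
  have "Ck Y (q + d) \<subseteq> Ck Y (q + d + 1) \<and>
        int (card (Ck Y (q + d + 1))) - int (card (Ck Y (q + d))) \<le> 1"
    using cr_quota1[OF cr Y] by blast
  thus ?case using Suc by auto
qed


lemma ss_fst_Suc: "fst (seq_state C qf ind Y (Suc j)) =
   fst (seq_state C qf ind Y j) \<union> C (Suc j) (avail C qf ind Y (Suc j)) (cap C qf ind Y (Suc j))"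
  by (simp add: avail_def cap_def Let_def split_def)

lemma ss_snd: "snd (seq_state C qf ind Y j) i =
   (if 1 \<le> i \<and> i \<le> j then int (cap C qf ind Y i) - int (card (C i (avail C qf ind Y i) (cap C qf ind Y i))) else 0)"
proof (induction j)
  case 0 thus ?case by simp
next
  case (Suc j)
  show ?case
    using Suc by (auto simp add: avail_def cap_def Let_def split_def)
qed

lemma ss_fst_mono: "j \<le> j' \<Longrightarrow> fst (seq_state C qf ind Y j) \<subseteq> fst (seq_state C qf ind Y j')"
proof (induction j' rule: dec_induct)
  case base thus ?case by simp
next
  case (step j') thus ?case using ss_fst_Suc[of C qf ind Y j'] by auto
qed

lemma chosen_in_fst: "1 \<le> k \<Longrightarrow> k \<le> j \<Longrightarrow>
   C k (avail C qf ind Y k) (cap C qf ind Y k) \<subseteq> fst (seq_state C qf ind Y j)"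
  using ss_fst_Suc[of C qf ind Y "k - 1"] ss_fst_mono[of k j C qf ind Y] by auto

lemma fst_ss_elem: "z \<in> fst (seq_state C qf ind Y j) \<Longrightarrow>
   \<exists>i. 1 \<le> i \<and> i \<le> j \<and> z \<in> C i (avail C qf ind Y i) (cap C qf ind Y i)"
proof (induction j)
  case 0 thus ?case by simp
next
  case (Suc j)
  thus ?case using ss_fst_Suc[of C qf ind Y j] by (auto intro: le_SucI)
qed



locale P3 =
  fixes X :: "'x set" and ind :: "'x \<Rightarrow> 'i" and inst :: "'x \<Rightarrow> 's" and s :: 's and K :: nat
    and C :: "nat \<Rightarrow> 'x set \<Rightarrow> nat \<Rightarrow> 'x set" and qf :: "nat \<Rightarrow> (nat \<Rightarrow> int) \<Rightarrow> nat"
    and xs :: "'x list"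
  assumes rule: "gen_seq_rule X ind inst s K C qf"
    and obs: "observable X ind inst s K C qf xs"
begin

abbreviation "Xs \<equiv> contracts_of X inst s"
abbreviation "HH k n \<equiv> avail C qf ind (set (take n xs)) k"
abbreviation "QQ k n \<equiv> cap C qf ind (set (take n xs)) k"
abbreviation "FF k n \<equiv> F_avail C qf ind xs k n"
abbreviation "CC k n \<equiv> C k (HH k n) (QQ k n)"
abbreviation "SS n j \<equiv> seq_state C qf ind (set (take n xs)) j"

lemma finXs: "finite Xs" using rule unfolding gen_seq_rule_def contracts_of_def by auto
lemma cr: "1 \<le> k \<Longrightarrow> k \<le> K \<Longrightarrow> category_rule Xs ind (C k)"
  using rule unfolding gen_seq_rule_def by auto
lemma mt: "monotone_transfer qf K" using rule unfolding gen_seq_rule_def by auto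
lemma YX: "set (take n xs) \<subseteq> Xs" using obs unfolding observable_def
  by (meson order_trans set_take_subset)
lemma HX: "HH k n \<subseteq> set (take n xs)" by (auto simp: avail_def)
lemma HXs: "HH k n \<subseteq> Xs" using HX YX by blast
lemma FF_Suc: "FF k (Suc n) = FF k n \<union> HH k (Suc n)"
  by (auto simp: F_avail_def atLeast0_atMost_Suc)
lemma FF_0: "FF k 0 = HH k 0" by (simp add: F_avail_def)
lemma HF: "HH k n \<subseteq> FF k n" by (auto simp: F_avail_def)
lemma FXs: "FF k n \<subseteq> Xs" using HXs by (auto simp: F_avail_def)
lemma Ytake: "n < length xs \<Longrightarrow> set (take (Suc n) xs) = insert (xs!n) (set (take n xs))"
  by (simp add: take_Suc_conv_app_nth)
lemma obsn: "n < length xs \<Longrightarrow> ind (xs!n) \<notin> ind ` seq_choice C qf ind K (set (take n xs))"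
  using obs unfolding observable_def by auto


lemma step:
  assumes n: "n < length xs"
    and hyp: "\<And>j. 1 \<le> j \<Longrightarrow> j \<le> K \<Longrightarrow> CC j n = C j (FF j n) (QQ j n)"
  shows "1 \<le> k \<Longrightarrow> k \<le> K \<Longrightarrow>
     CC k n \<subseteq> HH k (Suc n)
   \<and> C k (FF k (Suc n)) (QQ k (Suc n)) \<subseteq> CC k n \<union> (HH k (Suc n) - HH k n)
   \<and> CC k (Suc n) = C k (FF k (Suc n)) (QQ k (Suc n))
   \<and> QQ k (Suc n) \<le> QQ k n
   \<and> rejected C k (FF k n) (QQ k n) \<subseteq> rejected C k (FF k (Suc n)) (QQ k (Suc n))"
proof (induction k rule: less_induct)
  case (less k)
  have k1: "1 \<le> k" and kK: "k \<le> K" using less.prems by auto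
  have IH: "\<And>j. 1 \<le> j \<Longrightarrow> j < k \<Longrightarrow>
     CC j n \<subseteq> HH j (Suc n)
   \<and> C j (FF j (Suc n)) (QQ j (Suc n)) \<subseteq> CC j n \<union> (HH j (Suc n) - HH j n)
   \<and> CC j (Suc n) = C j (FF j (Suc n)) (QQ j (Suc n))
   \<and> QQ j (Suc n) \<le> QQ j n"
    using less.IH kK by (meson less_imp_le_nat order.strict_trans2 order_trans)
  note crk = cr[OF k1 kK]
  have FFsub: "FF k n \<subseteq> FF k (Suc n)" using FF_Suc by auto
  have c4: "QQ k (Suc n) \<le> QQ k n"
  proof -
    have "\<forall>j\<in>{1..<k}. snd (SS (Suc n) (k - 1)) j \<le> snd (SS n (k - 1)) j"
    proof
      fix j assume j: "j \<in> {1..<k}"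
      hence j1: "1 \<le> j" and jk: "j < k" by auto
      have crj: "category_rule Xs ind (C j)" using cr j kK by auto
      from IH[OF j1 jk] have a: "CC j (Suc n) = C j (FF j (Suc n)) (QQ j (Suc n))"
        and b: "QQ j (Suc n) \<le> QQ j n" by auto
      have c: "CC j n = C j (FF j n) (QQ j n)" using hyp j1 jk kK by auto
      obtain d where d: "QQ j n = QQ j (Suc n) + d" using b le_Suc_ex by blast
      have "int (QQ j (Suc n)) - int (card (C j (FF j (Suc n)) (QQ j (Suc n))))
          \<le> int (QQ j n) - int (card (C j (FF j (Suc n)) (QQ j n)))"
        using cr_quota[OF crj FXs, of j "Suc n" "QQ j (Suc n)" d] d by simp
      also have "\<dots> \<le> int (QQ j n) - int (card (C j (FF j n) (QQ j n)))"
        using cr_size[OF crj finXs, of "FF j n" "FF j (Suc n)" "QQ j n"] FF_Suc[of j n] FXs[of j "Suc n"]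
        by auto
      finally show "snd (SS (Suc n) (k - 1)) j \<le> snd (SS n (k - 1)) j"
        using j a c by (simp add: ss_snd)
    qed
    thus ?thesis using mt k1 kK unfolding monotone_transfer_def cap_def by auto
  qed
  have c5: "rejected C k (FF k n) (QQ k n) \<subseteq> rejected C k (FF k (Suc n)) (QQ k (Suc n))"
  proof
    fix z assume "z \<in> rejected C k (FF k n) (QQ k n)"
    hence zF: "z \<in> FF k n" and zn: "z \<notin> C k (FF k n) (QQ k n)" by (auto simp: rejected_def)
    have "z \<notin> C k (FF k (Suc n)) (QQ k n)"
      using cr_subst[OF crk finXs FFsub FXs zF zn] .
    moreover obtain d where d: "QQ k n = QQ k (Suc n) + d" using c4 le_Suc_ex by blast
    ultimately have "z \<notin> C k (FF k (Suc n)) (QQ k (Suc n))"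
      using cr_quota[OF crk FXs, of k "Suc n" "QQ k (Suc n)" d] by auto
    thus "z \<in> rejected C k (FF k (Suc n)) (QQ k (Suc n))"
      using zF FFsub by (auto simp: rejected_def)
  qed
  have c2: "C k (FF k (Suc n)) (QQ k (Suc n)) \<subseteq> CC k n \<union> (HH k (Suc n) - HH k n)"
  proof
    fix z assume zC: "z \<in> C k (FF k (Suc n)) (QQ k (Suc n))"
    hence zF': "z \<in> FF k (Suc n)" using cr_sub[OF crk FXs] by blast
    show "z \<in> CC k n \<union> (HH k (Suc n) - HH k n)"
    proof (cases "z \<in> FF k n")
      case True
      hence "z \<in> C k (FF k n) (QQ k n)" using c5 zC by (auto simp: rejected_def)
      thus ?thesis using hyp[OF k1 kK] by auto
    next
      case False
      thus ?thesis using zF' FF_Suc[of k n] HF[of n k] by auto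
    qed
  qed
  have c1: "CC k n \<subseteq> HH k (Suc n)"
  proof
    fix y assume y: "y \<in> CC k n"
    have yH: "y \<in> HH k n" using y cr_sub[OF crk HXs] by blast
    hence yY: "y \<in> set (take n xs)" and yi: "ind y \<notin> ind ` fst (SS n (k - 1))"
      by (auto simp: avail_def)
    have yS: "y \<in> seq_choice C qf ind K (set (take n xs))"
      using chosen_in_fst[OF k1 kK, where C=C and qf=qf and ind=ind and Y="set (take n xs)"] y unfolding seq_choice_def by blast
    have "ind y \<notin> ind ` fst (SS (Suc n) (k - 1))"
    proof
      assume "ind y \<in> ind ` fst (SS (Suc n) (k - 1))"
      then obtain z where z: "z \<in> fst (SS (Suc n) (k - 1))" and iz: "ind z = ind y" by auto
      from fst_ss_elem[OF z] obtain j where j1: "1 \<le> j" and jk: "j \<le> k - 1"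
        and zc: "z \<in> CC j (Suc n)" by blast
      have jk': "j < k" using jk k1 by auto
      from IH[OF j1 jk'] zc have zz: "z \<in> CC j n \<union> (HH j (Suc n) - HH j n)" by auto
      show False
      proof (cases "z \<in> CC j n")
        case True
        hence "z \<in> fst (SS n (k - 1))" using chosen_in_fst[OF j1 jk, where C=C and qf=qf and ind=ind and Y="set (take n xs)"] by blast
        thus False using yi iz by (metis image_eqI)
      next
        case False
        hence zH': "z \<in> HH j (Suc n)" and zH: "z \<notin> HH j n" using zz by auto
        have "z \<in> set (take (Suc n) xs)" using zH' HX by blast
        hence "z = xs ! n \<or> z \<in> set (take n xs)" using Ytake[OF n] by auto
        thus False
        proof
          assume "z = xs ! n"
          thus False using obsn[OF n] yS iz by (metis image_eqI)
        next
          assume zY: "z \<in> set (take n xs)"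
          hence "ind z \<in> ind ` fst (SS n (j - 1))" using zH by (auto simp: avail_def)
          moreover have "fst (SS n (j - 1)) \<subseteq> fst (SS n (k - 1))"
            using ss_fst_mono[of "j - 1" "k - 1" C qf ind "set (take n xs)"] jk by auto
          ultimately show False using yi iz by auto
        qed
      qed
    qed
    moreover have "y \<in> set (take (Suc n) xs)" using yY Ytake[OF n] by auto
    ultimately show "y \<in> HH k (Suc n)" by (auto simp: avail_def)
  qed
  have c3: "CC k (Suc n) = C k (FF k (Suc n)) (QQ k (Suc n))"
    using cr_irc[OF crk finXs HF FXs] c1 c2 by blast
  show ?case using c1 c2 c3 c4 c5 by blast
qed

lemma all_n: "n \<le> length xs \<Longrightarrow> 1 \<le> k \<Longrightarrow> k \<le> K \<Longrightarrow> CC k n = C k (FF k n) (QQ k n)"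
proof (induction n arbitrary: k)
  case 0 thus ?case by (simp add: FF_0)
next
  case (Suc n)
  have "n < length xs" using Suc.prems by auto
  thus ?case using step[of n k] Suc by auto
qed

end

theorem proposition3:
  fixes X :: "'x set" and ind :: "'x \<Rightarrow> 'i" and inst :: "'x \<Rightarrow> 's" and s :: 's
    and K :: nat and C :: "nat \<Rightarrow> 'x set \<Rightarrow> nat \<Rightarrow> 'x set"
    and qf :: "nat \<Rightarrow> (nat \<Rightarrow> int) \<Rightarrow> nat" and xs :: "'x list"
  assumes rule: "gen_seq_rule X ind inst s K C qf"
    and obs: "observable X ind inst s K C qf xs"
    and m: "1 \<le> m" "m \<le> length xs"
    and k: "1 \<le> k" "k \<le> K"
  defines "H \<equiv> \<lambda>n. avail C qf ind (set (take n xs)) k"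
    and "q \<equiv> \<lambda>n. cap C qf ind (set (take n xs)) k"
    and "F \<equiv> \<lambda>n. F_avail C qf ind xs k n"
  shows "C k (H (m - 1)) (q (m - 1)) \<subseteq> H m
       \<and> C k (F m) (q m) \<subseteq> C k (H (m - 1)) (q (m - 1)) \<union> (H m - H (m - 1))
       \<and> C k (H m) (q m) = C k (F m) (q m)
       \<and> q (m - 1) \<ge> q m
       \<and> rejected C k (F (m - 1)) (q (m - 1)) \<subseteq> rejected C k (F m) (q m)"
proof -
  interpret P3 X ind inst s K C qf xs using rule obs by unfold_locales
  obtain n where mn: "m = Suc n" using m(1) by (cases m) auto
  have nl: "n < length xs" using m mn by auto
  have hyp: "\<And>j. 1 \<le> j \<Longrightarrow> j \<le> K \<Longrightarrow> CC j n = C j (FF j n) (QQ j n)"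
    using all_n nl by auto
  show ?thesis unfolding H_def q_def F_def mn using step[OF nl hyp k] by simp
qed

end
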